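(* Let $h$ be a positive integer and let $0<\beta<1$ be a real. There is a positive real $\alpha$ depending on $h$ and $\beta$ such that the following holds. Let $G$ be any graph on $n$ vertices and let $p=\frac{2e(G)}{n^2}$. For $i,j\in[h]$ let $\mathcal{A}_{i,j}$ denote the set of $i$-good sequences of length $j$ relative to $(\alpha,\beta,h,1)$ in $V(G)$. Then for all $i,j\in[h]$, \[\sum_{S\in\mathcal{A}_{i,j}}|N(S)|\geq(1-\beta)\,n^{j+1}p^j.\] In particular, there exists an $i$-good sequence $S$ of length $j$ such that $|N(S)|\ge(1-\beta)p^j n$.
   Context: All graphs are finite and simple. A sequence in a set $W$ is a finite sequence of elements of $W$ (repetitions allowed); its length $|S|$ counts multiplicity; $W^k$ denotes the set of sequences of length $k$ in $W$. For a sequence $S$ in $V(G)$, $N(S)$ is the set of vertices adjacent to every vertex of $S$. Goodness relative to $(\alpha,\beta,h,1)$, with $p=2e(G)/n^2$: a sequence $T$ in $V(G)$ is $0$-good if $|N(T)|\ge\alpha p^{|T|}n$; for $1\le i\le h$, a sequence $S$ in $V(G)$ of length at most $h$ is $i$-good if $S$ is $0$-good and for each $|S|\le k\le h$, the number of $(i-1)$-good sequences in $N(S)^k$ is at least $(1-\beta)|N(S)|^k$. *)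

theory Defs
  imports Main "HOL.Real"
begin

definition simple_graph :: "nat set \<Rightarrow> (nat \<Rightarrow> nat \<Rightarrow> bool) \<Rightarrow> bool" where
  "simple_graph V E \<longleftrightarrow> finite V \<and> (\<forall>u v. E u v \<longrightarrow> u \<in> V \<and> v \<in> V)
      \<and> (\<forall>u v. E u v \<longrightarrow> E v u) \<and> (\<forall>u. \<not> E u u)"

definition num_edges :: "nat set \<Rightarrow> (nat \<Rightarrow> nat \<Rightarrow> bool) \<Rightarrow> nat" where
  "num_edges V E = card {{u, v} | u v. u \<in> V \<and> v \<in> V \<and> E u v}"

definition density :: "nat set \<Rightarrow> (nat \<Rightarrow> nat \<Rightarrow> bool) \<Rightarrow> real" where
  "density V E = 2 * real (num_edges V E) / (real (card V))^2"

definition nbhd :: "nat set \<Rightarrow> (nat \<Rightarrow> nat \<Rightarrow> bool) \<Rightarrow> nat list \<Rightarrow> nat set" where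
  "nbhd V E S = {v \<in> V. \<forall>u \<in> set S. E u v}"

fun good :: "real \<Rightarrow> real \<Rightarrow> nat \<Rightarrow> nat set \<Rightarrow> (nat \<Rightarrow> nat \<Rightarrow> bool) \<Rightarrow> nat \<Rightarrow> nat list \<Rightarrow> bool" where
  "good \<alpha> \<beta> h V E 0 T \<longleftrightarrow>
     set T \<subseteq> V \<and>
     real (card (nbhd V E T)) \<ge> \<alpha> * density V E ^ length T * real (card V)"
| "good \<alpha> \<beta> h V E (Suc i) S \<longleftrightarrow>
     set S \<subseteq> V \<and> length S \<le> h \<and> good \<alpha> \<beta> h V E 0 S \<and>
     (\<forall>k. length S \<le> k \<and> k \<le> h \<longrightarrow>
        real (card {T. length T = k \<and> set T \<subseteq> nbhd V E S \<and> good \<alpha> \<beta> h V E i T})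
          \<ge> (1 - \<beta>) * real (card (nbhd V E S)) ^ k)"

definition good_seqs :: "real \<Rightarrow> real \<Rightarrow> nat \<Rightarrow> nat set \<Rightarrow> (nat \<Rightarrow> nat \<Rightarrow> bool) \<Rightarrow> nat \<Rightarrow> nat \<Rightarrow> nat list set" where
  "good_seqs \<alpha> \<beta> h V E i j = {S. length S = j \<and> set S \<subseteq> V \<and> good \<alpha> \<beta> h V E i S}"

end

theory Submission
  imports Defs
begin

definition seqs :: "nat set \<Rightarrow> nat \<Rightarrow> nat list set" where
  "seqs A k = {T. length T = k \<and> set T \<subseteq> A}"

lemma finite_seqs: "finite A \<Longrightarrow> finite (seqs A k)"
  unfolding seqs_def using finite_lists_length_eq[of A k] by (simp add: conj_commute)

lemma card_seqs: "finite A \<Longrightarrow> card (seqs A k) = card A ^ k"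
  unfolding seqs_def using card_lists_length_eq[of A k] by (simp add: conj_commute)

lemma cheb:
  fixes x :: "'a \<Rightarrow> real"
  assumes "finite A" "\<And>a. a \<in> A \<Longrightarrow> x a \<ge> 0"
  shows "(\<Sum>a\<in>A. x a ^ j) * (\<Sum>a\<in>A. x a) \<le> real (card A) * (\<Sum>a\<in>A. x a ^ Suc j)"
proof -
  have t: "0 \<le> (x a ^ j - x b ^ j) * (x a - x b)" if "a \<in> A" "b \<in> A" for a b
  proof (cases "x b \<le> x a")
    case True
    then have "x b ^ j \<le> x a ^ j" using assms(2)[OF that(2)] by (simp add: power_mono)
    then show ?thesis using True by simp
  next
    case False
    then have "x a ^ j \<le> x b ^ j" using assms(2)[OF that(1)] by (simp add: power_mono)
    then show ?thesis using False by (intro mult_nonpos_nonpos) auto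
  qed
  have "0 \<le> (\<Sum>a\<in>A. \<Sum>b\<in>A. (x a ^ j - x b ^ j) * (x a - x b))"
    by (intro sum_nonneg) (use t in auto)
  also have "\<dots> = (\<Sum>a\<in>A. \<Sum>b\<in>A. x a ^ Suc j + x b ^ Suc j - x a ^ j * x b - x b ^ j * x a)"
    by (intro sum.cong refl) (simp add: algebra_simps)
  also have "\<dots> = (\<Sum>a\<in>A. \<Sum>b\<in>A. x a ^ Suc j) + (\<Sum>a\<in>A. \<Sum>b\<in>A. x b ^ Suc j)
       - (\<Sum>a\<in>A. \<Sum>b\<in>A. x a ^ j * x b) - (\<Sum>a\<in>A. \<Sum>b\<in>A. x b ^ j * x a)"
    by (simp only: sum.distrib sum_subtractf)
  also have "\<dots> = 2 * (real (card A) * (\<Sum>a\<in>A. x a ^ Suc j)) - 2 * ((\<Sum>a\<in>A. x a ^ j) * (\<Sum>a\<in>A. x a))"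
  proof -
    have h1: "(\<Sum>a\<in>A. \<Sum>b\<in>A. x a ^ Suc j) = real (card A) * (\<Sum>a\<in>A. x a ^ Suc j)"
      by (simp add: sum_distrib_left mult.commute)
    have h2: "(\<Sum>a\<in>A. \<Sum>b\<in>A. x b ^ Suc j) = real (card A) * (\<Sum>a\<in>A. x a ^ Suc j)"
      by simp
    have h3: "(\<Sum>a\<in>A. \<Sum>b\<in>A. x a ^ j * x b) = (\<Sum>a\<in>A. x a ^ j) * (\<Sum>a\<in>A. x a)"
      by (simp add: sum_product)
    have h4: "(\<Sum>a\<in>A. \<Sum>b\<in>A. x b ^ j * x a) = (\<Sum>a\<in>A. x a ^ j) * (\<Sum>a\<in>A. x a)"
      by (subst sum.swap) (simp add: sum_product)
    show ?thesis unfolding h1 h2 h3 h4 by simp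
  qed
  finally show ?thesis by simp
qed

lemma pmean:
  fixes x :: "'a \<Rightarrow> real"
  assumes "finite A" "\<And>a. a \<in> A \<Longrightarrow> x a \<ge> 0" "1 \<le> j"
  shows "(\<Sum>a\<in>A. x a) ^ j \<le> real (card A) ^ (j - 1) * (\<Sum>a\<in>A. x a ^ j)"
  using assms(3)
proof (induction j rule: dec_induct)
  case base then show ?case by simp
next
  case (step j)
  have s0: "0 \<le> (\<Sum>a\<in>A. x a)" using assms(2) by (simp add: sum_nonneg)
  have "(\<Sum>a\<in>A. x a) ^ Suc j = (\<Sum>a\<in>A. x a) ^ j * (\<Sum>a\<in>A. x a)" by simp
  also have "\<dots> \<le> real (card A) ^ (j - 1) * (\<Sum>a\<in>A. x a ^ j) * (\<Sum>a\<in>A. x a)"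
    using step.IH s0 by (simp add: mult_right_mono)
  also have "\<dots> = real (card A) ^ (j - 1) * ((\<Sum>a\<in>A. x a ^ j) * (\<Sum>a\<in>A. x a))" by simp
  also have "\<dots> \<le> real (card A) ^ (j - 1) * (real (card A) * (\<Sum>a\<in>A. x a ^ Suc j))"
    using cheb[OF assms(1,2)] by (simp add: mult_left_mono)
  also have "\<dots> = real (card A) ^ (Suc j - 1) * (\<Sum>a\<in>A. x a ^ Suc j)"
    using step.hyps by (cases j) auto
  finally show ?case .
qed

lemma sg_facts:
  assumes "simple_graph V E"
  shows "finite V" "E u v \<Longrightarrow> u \<in> V" "E u v \<Longrightarrow> v \<in> V" "E u v \<Longrightarrow> E v u" "\<not> E u u"
  using assms unfolding simple_graph_def by blast+

lemma handshake:
  assumes G: "simple_graph V E"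
  shows "2 * real (num_edges V E) \<le> (\<Sum>v\<in>V. real (card {u\<in>V. E u v}))"
proof -
  note sg = sg_facts[OF G]
  define P where "P = {(u,v). u \<in> V \<and> v \<in> V \<and> E u v}"
  define P1 where "P1 = {(u,v). u \<in> V \<and> v \<in> V \<and> E u v \<and> u < v}"
  define P2 where "P2 = {(u,v). u \<in> V \<and> v \<in> V \<and> E u v \<and> v < u}"
  have fP: "finite P" unfolding P_def
    by (rule finite_subset[of _ "V \<times> V"]) (use sg(1) in auto)
  have PU: "P = P1 \<union> P2" unfolding P_def P1_def P2_def using sg(5) by (auto dest: not_less_iff_gr_or_eq[THEN iffD1])
  have fP1: "finite P1" "finite P2" using fP PU by auto
  have disj: "P1 \<inter> P2 = {}" unfolding P1_def P2_def by auto
  have "P2 = (\<lambda>(u,v). (v,u)) ` P1" unfolding P1_def P2_def using sg(4) by auto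
  moreover have "inj_on (\<lambda>(u,v). (v::nat,u::nat)) P1" by (auto simp: inj_on_def)
  ultimately have c2: "card P2 = card P1" by (simp add: card_image)
  have cP: "card P = 2 * card P1" using PU disj fP1 c2 by (simp add: card_Un_disjoint)
  have "{{u, v} | u v. u \<in> V \<and> v \<in> V \<and> E u v} = (\<lambda>(u,v). {u,v}) ` P1"
  proof
    show "(\<lambda>(u,v). {u,v}) ` P1 \<subseteq> {{u, v} | u v. u \<in> V \<and> v \<in> V \<and> E u v}" unfolding P1_def by auto
  next
    show "{{u, v} | u v. u \<in> V \<and> v \<in> V \<and> E u v} \<subseteq> (\<lambda>(u,v). {u,v}) ` P1"
    proof
      fix e assume "e \<in> {{u, v} | u v. u \<in> V \<and> v \<in> V \<and> E u v}"
      then obtain u v where e: "e = {u,v}" "u \<in> V" "v \<in> V" "E u v" by blast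
      have "u \<noteq> v" using e(4) sg(5) by auto
      then show "e \<in> (\<lambda>(u,v). {u,v}) ` P1"
      proof (cases "u < v")
        case True then show ?thesis unfolding P1_def using e by (auto intro!: image_eqI[of _ _ "(u,v)"])
      next
        case False then have "v < u" using \<open>u \<noteq> v\<close> by auto
        then show ?thesis unfolding P1_def using e sg(4)[OF e(4)]
          by (auto intro!: image_eqI[of _ _ "(v,u)"])
      qed
    qed
  qed
  then have "num_edges V E \<le> card P1" unfolding num_edges_def using card_image_le[OF fP1(1)] by simp
  then have "2 * num_edges V E \<le> card P" using cP by simp
  also have "card P = (\<Sum>v\<in>V. card {u\<in>V. E u v})"
  proof -
    have "P = (\<lambda>(v,u). (u,v)) ` (SIGMA v:V. {u\<in>V. E u v})" unfolding P_def by force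
    moreover have "inj_on (\<lambda>(v::nat,u::nat). (u,v)) (SIGMA v:V. {u\<in>V. E u v})" by (auto simp: inj_on_def)
    ultimately have "card P = card (SIGMA v:V. {u\<in>V. E u v})" by (simp add: card_image)
    also have "\<dots> = (\<Sum>v\<in>V. card {u\<in>V. E u v})" using sg(1) by (simp add: card_SigmaI)
    finally show ?thesis .
  qed
  finally show ?thesis by (metis of_nat_le_iff of_nat_mult of_nat_numeral of_nat_sum)
qed

lemma arith1:
  fixes D be lam p n :: real
  assumes "p > 0" "n > 0" "lam > 0" "m \<le> j" "j \<le> k"
  shows "D * n^(k+j) * p^(k*j) / (be * (lam*p^j*n)^(k-m)) = D/(be*lam^(k-m)) * (n^(j+m) * p^(j*m))"
proof -
  obtain d where k: "k = m + d" using assms by (metis le_add_diff_inverse le_trans)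
  have e1: "k - m = d" "k + j = d + (j + m)" "k * j = j * d + j * m" using k by (auto simp: algebra_simps)
  have pc: "(p^d)^j = (p^j)^d" by (simp add: power_mult[symmetric] mult.commute)
  show ?thesis unfolding e1 using assms
    by (simp add: power_add power_mult_distrib power_mult pc field_simps)
qed

lemma arith2:
  fixes al p n :: real
  shows "n^j * (al*p^j*n)^m = al^m * (n^(j+m) * p^(j*m))"
  by (simp add: power_add power_mult_distrib power_mult mult_ac)

locale gs =
  fixes al be :: real and h :: nat and V :: "nat set" and E :: "nat \<Rightarrow> nat \<Rightarrow> bool"
  assumes G: "simple_graph V E" and al0: "0 < al" and al1: "al \<le> 1"
    and be0: "0 < be" and be1: "be < 1"
begin

abbreviation "gd \<equiv> good al be h V E"
abbreviation "nn \<equiv> real (card V)"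
abbreviation "pp \<equiv> density V E"

definition bad_set where "bad_set i k = {T \<in> seqs V k. \<not> gd i T}"
definition bsum where "bsum i k m = (\<Sum>T\<in>bad_set i k. real (card (nbhd V E T)) ^ m)"
definition GB where
  "GB i D \<longleftrightarrow> (\<forall>k m. 1 \<le> m \<longrightarrow> m \<le> k \<longrightarrow> k \<le> h \<longrightarrow> bsum i k m \<le> D * nn^(k+m) * pp^(k*m))"

lemmas sg = sg_facts[OF G]

lemma nb_sub: "nbhd V E S \<subseteq> V" unfolding nbhd_def by auto
lemma fin_nb: "finite (nbhd V E S)" using nb_sub sg(1) finite_subset by blast
lemma fin_bad: "finite (bad_set i k)" unfolding bad_set_def using finite_seqs[OF sg(1)] by auto
lemma bad_sub: "bad_set i k \<subseteq> seqs V k" unfolding bad_set_def by auto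
lemma pp_nonneg: "0 \<le> pp" unfolding density_def by simp

lemma base: "GB 0 al"
  unfolding GB_def
proof (intro allI impI)
  fix k m :: nat assume m1: "1 \<le> m" and mk: "m \<le> k" and kh: "k \<le> h"
  define K where "K = al * (nn^m * pp^(k*m))"
  have K0: "0 \<le> K" unfolding K_def using al0 pp_nonneg by simp
  have each: "real (card (nbhd V E T)) ^ m \<le> K" if "T \<in> bad_set 0 k" for T
  proof -
    from that have "real (card (nbhd V E T)) < al * pp ^ k * nn"
      unfolding bad_set_def seqs_def by auto
    then have "real (card (nbhd V E T)) ^ m \<le> (al * pp ^ k * nn) ^ m"
      by (intro power_mono) auto
    also have "\<dots> = al ^ m * (nn^m * pp^(k*m))"
      by (simp add: power_mult_distrib power_mult mult_ac)
    also have "\<dots> \<le> al * (nn^m * pp^(k*m))"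
      using power_decreasing[OF m1, of al] al0 al1 pp_nonneg
      by (intro mult_right_mono) auto
    finally show ?thesis unfolding K_def .
  qed
  have "bsum 0 k m \<le> real (card (bad_set 0 k)) * K"
    unfolding bsum_def using each by (rule sum_bounded_above)
  also have "\<dots> \<le> nn ^ k * K"
  proof -
    have "card (bad_set 0 k) \<le> card (seqs V k)"
      using bad_sub finite_seqs[OF sg(1)] by (rule card_mono[rotated])
    then have "real (card (bad_set 0 k)) \<le> nn ^ k" using card_seqs[OF sg(1), of k]
      by (metis of_nat_le_iff of_nat_power)
    then show ?thesis using K0 by (rule mult_right_mono)
  qed
  also have "\<dots> = al * nn^(k+m) * pp^(k*m)" unfolding K_def by (simp add: power_add)
  finally show "bsum 0 k m \<le> al * nn^(k+m) * pp^(k*m)" .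
qed

lemma dc: "set T \<subseteq> V \<Longrightarrow> {S \<in> seqs V j. set T \<subseteq> nbhd V E S} = seqs (nbhd V E T) j"
proof -
  have s: "E u v \<longleftrightarrow> E v u" for u v using sg(4) by blast
  assume "set T \<subseteq> V"
  then show ?thesis unfolding seqs_def nbhd_def using sg(4) by (intro set_eqI iffI) (simp_all add: subset_iff; blast)+
qed

lemma dcount: "(\<Sum>S\<in>seqs V j. real (card {T\<in>bad_set i k. set T \<subseteq> nbhd V E S})) = bsum i k j"
proof -
  have "(\<Sum>S\<in>seqs V j. real (card {T\<in>bad_set i k. set T \<subseteq> nbhd V E S}))
      = (\<Sum>S\<in>seqs V j. \<Sum>T\<in>bad_set i k. if set T \<subseteq> nbhd V E S then 1 else 0)"
    by (intro sum.cong refl) (simp add: sum.inter_filter[OF fin_bad, symmetric])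
  also have "\<dots> = (\<Sum>T\<in>bad_set i k. \<Sum>S\<in>seqs V j. if set T \<subseteq> nbhd V E S then 1 else 0)"
    by (rule sum.swap)
  also have "\<dots> = (\<Sum>T\<in>bad_set i k. real (card (nbhd V E T)) ^ j)"
  proof (intro sum.cong refl)
    fix T assume "T \<in> bad_set i k"
    then have TV: "set T \<subseteq> V" unfolding bad_set_def seqs_def by auto
    have "(\<Sum>S\<in>seqs V j. if set T \<subseteq> nbhd V E S then 1 else 0) = real (card {S \<in> seqs V j. set T \<subseteq> nbhd V E S})"
      by (simp add: sum.inter_filter[OF finite_seqs[OF sg(1)], symmetric])
    also have "\<dots> = real (card (nbhd V E T)) ^ j" unfolding dc[OF TV] card_seqs[OF fin_nb] by simp
    finally show "(\<Sum>S\<in>seqs V j. if set T \<subseteq> nbhd V E S then 1 else 0) = real (card (nbhd V E T)) ^ j" .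
  qed
  finally show ?thesis unfolding bsum_def .
qed

lemma split_count:
  "real (card {T. length T = k \<and> set T \<subseteq> nbhd V E S \<and> gd i T})
   + real (card {T\<in>bad_set i k. set T \<subseteq> nbhd V E S}) = real (card (nbhd V E S)) ^ k"
proof -
  let ?A = "{T. length T = k \<and> set T \<subseteq> nbhd V E S \<and> gd i T}"
  let ?B = "{T\<in>bad_set i k. set T \<subseteq> nbhd V E S}"
  have U: "?A \<union> ?B = seqs (nbhd V E S) k" unfolding bad_set_def seqs_def using nb_sub by auto
  have f: "finite (seqs (nbhd V E S) k)" by (rule finite_seqs[OF fin_nb])
  have fU: "finite (?A \<union> ?B)" using f U by simp
  have fA: "finite ?A" "finite ?B" using fU by simp_all
  have dj: "?A \<inter> ?B = {}" unfolding bad_set_def by blast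
  have "card ?A + card ?B = card (?A \<union> ?B)" using card_Un_disjoint[OF fA dj] by simp
  also have "\<dots> = card (nbhd V E S) ^ k" unfolding U by (rule card_seqs[OF fin_nb])
  finally have "real (card ?A + card ?B) = real (card (nbhd V E S) ^ k)" by (rule arg_cong)
  then show ?thesis by (simp only: of_nat_add of_nat_power)
qed

lemma bad_suc:
  assumes S: "S \<in> seqs V j" and jh: "j \<le> h" and nb: "\<not> gd (Suc i) S"
  shows "\<not> gd 0 S \<or> (\<exists>k. j \<le> k \<and> k \<le> h \<and>
     real (card {T\<in>bad_set i k. set T \<subseteq> nbhd V E S}) > be * real (card (nbhd V E S)) ^ k)"
proof (cases "gd 0 S")
  case True
  from S have Sl: "length S = j" "set S \<subseteq> V" unfolding seqs_def by auto
  with nb True jh obtain k where k: "j \<le> k" "k \<le> h"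
    "real (card {T. length T = k \<and> set T \<subseteq> nbhd V E S \<and> gd i T}) < (1 - be) * real (card (nbhd V E S)) ^ k"
    by (auto simp: not_le)
  then have "real (card {T\<in>bad_set i k. set T \<subseteq> nbhd V E S}) > be * real (card (nbhd V E S)) ^ k"
    using split_count[of k S i] by (simp add: algebra_simps)
  then show ?thesis using k by blast
qed simp

end

context gs begin

lemma GB_mono: "GB i D \<Longrightarrow> D \<le> D' \<Longrightarrow> GB i D'"
  unfolding GB_def using pp_nonneg
  by (meson mult_right_mono order_trans zero_le_power of_nat_0_le_iff)

lemma step:
  assumes GBi: "GB i D" and D0: "0 \<le> D" and l0: "0 < lam" and l1: "lam \<le> 1" and p0: "0 < pp"
  shows "GB (Suc i) (al + real h * (lam + D / (be * lam ^ h)))"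
  unfolding GB_def
proof (intro allI impI)
  fix j m :: nat assume m1: "1 \<le> m" and mj: "m \<le> j" and jh: "j \<le> h"
  have n0: "0 < nn"
  proof (rule ccontr)
    assume "\<not> 0 < nn" then have "nn = 0" by simp
    then have "pp = 0" unfolding density_def by simp
    then show False using p0 by simp
  qed
  define L where "L = lam * pp ^ j * nn"
  have L0: "0 < L" unfolding L_def using l0 p0 n0 by simp
  define c where "c S = real (card (nbhd V E S))" for S
  define B where "B k S = real (card {T\<in>bad_set i k. set T \<subseteq> nbhd V E S})" for k S
  define R where "R S = (al * pp ^ j * nn) ^ m + (\<Sum>k\<in>{j..h}. L ^ m + B k S / (be * L ^ (k - m)))" for S
  have c0: "0 \<le> c S" for S unfolding c_def by simp
  have summ0: "0 \<le> L ^ m + B k S / (be * L ^ (k - m))" for k S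
    using L0 be0 unfolding B_def by simp
  have R0: "0 \<le> R S" for S unfolding R_def
    by (rule add_nonneg_nonneg[OF _ sum_nonneg[OF summ0]]) (use al0 p0 n0 in auto)
  have pw: "c S ^ m \<le> R S" if S: "S \<in> bad_set (Suc i) j" for S
  proof -
    from S have Sj: "S \<in> seqs V j" and nb: "\<not> gd (Suc i) S" unfolding bad_set_def by auto
    from bad_suc[OF Sj jh nb] show ?thesis
    proof
      assume "\<not> gd 0 S"
      then have "c S < al * pp ^ j * nn" using Sj unfolding c_def seqs_def by auto
      then have "c S ^ m \<le> (al * pp ^ j * nn) ^ m" using c0 by (intro power_mono) auto
      also have "\<dots> \<le> R S" unfolding R_def by (rule add_increasing2[OF sum_nonneg[OF summ0]]) simp
      finally show ?thesis .
    next
      assume "\<exists>k. j \<le> k \<and> k \<le> h \<and>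
        real (card {T\<in>bad_set i k. set T \<subseteq> nbhd V E S}) > be * real (card (nbhd V E S)) ^ k"
      then obtain k where k: "j \<le> k" "k \<le> h" and Bk: "B k S > be * c S ^ k"
        unfolding B_def c_def by auto
      have "c S ^ m \<le> L ^ m + B k S / (be * L ^ (k - m))"
      proof (cases "c S \<le> L")
        case True
        then have "c S ^ m \<le> L ^ m" using c0 by (intro power_mono) auto
        moreover have "0 \<le> B k S / (be * L ^ (k - m))" using L0 be0 unfolding B_def by simp
        ultimately show ?thesis by simp
      next
        case False
        then have "L ^ (k - m) \<le> c S ^ (k - m)" using L0 by (intro power_mono) auto
        then have "L ^ (k - m) * c S ^ m \<le> c S ^ (k - m) * c S ^ m"
          using c0 by (intro mult_right_mono) auto
        also have "\<dots> = c S ^ k" using mj k by (simp add: power_add[symmetric])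
        finally have "be * (L ^ (k - m) * c S ^ m) \<le> be * c S ^ k" using be0 by simp
        also have "\<dots> < B k S" by (rule Bk)
        finally have "c S ^ m * (be * L ^ (k - m)) < B k S" by (simp add: mult_ac)
        then have "c S ^ m < B k S / (be * L ^ (k - m))" using L0 be0
          by (simp add: pos_less_divide_eq)
        moreover have "0 \<le> L ^ m" using L0 by simp
        ultimately show ?thesis by simp
      qed
      also have "\<dots> \<le> (\<Sum>k\<in>{j..h}. L ^ m + B k S / (be * L ^ (k - m)))"
        using k summ0 by (intro member_le_sum) auto
      also have "\<dots> \<le> R S" unfolding R_def using al0 p0 n0 by simp
      finally show ?thesis .
    qed
  qed
  define X where "X = nn ^ (j + m) * pp ^ (j * m)"
  have X0: "0 \<le> X" unfolding X_def using n0 p0 by simp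
  have fS: "finite (seqs V j)" by (rule finite_seqs[OF sg(1)])
  have "bsum (Suc i) j m = (\<Sum>S\<in>bad_set (Suc i) j. c S ^ m)" unfolding bsum_def c_def by simp
  also have "\<dots> \<le> (\<Sum>S\<in>bad_set (Suc i) j. R S)" using pw by (rule sum_mono)
  also have "\<dots> \<le> (\<Sum>S\<in>seqs V j. R S)" using fS bad_sub R0 by (intro sum_mono2) auto
  also have "\<dots> = nn ^ j * (al * pp ^ j * nn) ^ m
       + (\<Sum>k\<in>{j..h}. nn ^ j * L ^ m + (\<Sum>S\<in>seqs V j. B k S) / (be * L ^ (k - m)))"
  proof -
    have "(\<Sum>S\<in>seqs V j. R S) = (\<Sum>S\<in>seqs V j. (al * pp ^ j * nn) ^ m)
       + (\<Sum>S\<in>seqs V j. \<Sum>k\<in>{j..h}. L ^ m + B k S / (be * L ^ (k - m)))"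
      unfolding R_def by (rule sum.distrib)
    also have "(\<Sum>S\<in>seqs V j. (al * pp ^ j * nn) ^ m) = nn ^ j * (al * pp ^ j * nn) ^ m"
      using card_seqs[OF sg(1), of j] by simp
    also have "(\<Sum>S\<in>seqs V j. \<Sum>k\<in>{j..h}. L ^ m + B k S / (be * L ^ (k - m)))
       = (\<Sum>k\<in>{j..h}. \<Sum>S\<in>seqs V j. L ^ m + B k S / (be * L ^ (k - m)))"
      by (rule sum.swap)
    also have "\<dots> = (\<Sum>k\<in>{j..h}. nn ^ j * L ^ m + (\<Sum>S\<in>seqs V j. B k S) / (be * L ^ (k - m)))"
      by (intro sum.cong refl) (simp add: sum.distrib sum_divide_distrib card_seqs[OF sg(1)])
    finally show ?thesis .
  qed
  also have "\<dots> \<le> al * X + (\<Sum>k\<in>{j..h}. (lam + D / (be * lam ^ h)) * X)"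
  proof (intro add_mono sum_mono)
    show "nn ^ j * (al * pp ^ j * nn) ^ m \<le> al * X"
      unfolding arith2 X_def using power_decreasing[OF m1, of al] al0 al1 X0[unfolded X_def]
      by (intro mult_right_mono) auto
  next
    fix k assume k: "k \<in> {j..h}"
    have "nn ^ j * L ^ m = lam ^ m * X" unfolding L_def X_def arith2[of nn j lam pp m] by simp
    also have "\<dots> \<le> lam * X" using power_decreasing[OF m1, of lam] l0 l1 X0
      by (intro mult_right_mono) auto
    finally have t1: "nn ^ j * L ^ m \<le> lam * X" .
    have "(\<Sum>S\<in>seqs V j. B k S) = bsum i k j" unfolding B_def by (rule dcount)
    also have "\<dots> \<le> D * nn ^ (k + j) * pp ^ (k * j)" using GBi k mj m1 unfolding GB_def by auto
    finally have "(\<Sum>S\<in>seqs V j. B k S) / (be * L ^ (k - m)) \<le> D * nn ^ (k + j) * pp ^ (k * j) / (be * L ^ (k - m))"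
      using be0 L0 by (intro divide_right_mono) auto
    also have "\<dots> = D / (be * lam ^ (k - m)) * X" unfolding L_def X_def
      using arith1[OF p0 n0 l0 mj, of k D be] k by simp
    also have "\<dots> \<le> D / (be * lam ^ h) * X"
    proof -
      have "lam ^ h \<le> lam ^ (k - m)" using k l0 l1 by (intro power_decreasing) auto
      then have "D / (be * lam ^ (k - m)) \<le> D / (be * lam ^ h)"
        using D0 be0 l0 by (intro divide_left_mono mult_left_mono mult_pos_pos) auto
      then show ?thesis using X0 by (rule mult_right_mono)
    qed
    finally show "nn ^ j * L ^ m + (\<Sum>S\<in>seqs V j. B k S) / (be * L ^ (k - m)) \<le> (lam + D / (be * lam ^ h)) * X"
      using t1 by (simp add: distrib_right)
  qed
  also have "\<dots> \<le> (al + real h * (lam + D / (be * lam ^ h))) * X"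
  proof -
    have "(\<Sum>k\<in>{j..h}. (lam + D / (be * lam ^ h)) * X) = real (Suc h - j) * ((lam + D / (be * lam ^ h)) * X)"
      by simp
    also have "\<dots> \<le> real h * ((lam + D / (be * lam ^ h)) * X)"
      using mj m1 l0 D0 be0 X0 by (intro mult_right_mono) auto
    finally have "al * X + (\<Sum>k\<in>{j..h}. (lam + D / (be * lam ^ h)) * X) \<le> al * X + real h * ((lam + D / (be * lam ^ h)) * X)"
      by (rule add_left_mono)
    also have "\<dots> = (al + real h * (lam + D / (be * lam ^ h))) * X" by (simp only: algebra_simps)
    finally show ?thesis .
  qed
  finally show "bsum (Suc i) j m \<le> (al + real h * (lam + D / (be * lam ^ h))) * nn ^ (j + m) * pp ^ (j * m)"
    unfolding X_def by (simp add: mult_ac)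
qed

end

definition gfun :: "nat \<Rightarrow> real \<Rightarrow> real \<Rightarrow> real" where
  "gfun h b t = b * t ^ (h + 1) / (3 * real h) ^ (h + 1)"

lemma gfun_props:
  assumes h: "0 < h" and b: "0 < b" "b < 1" and t: "0 < t" "t \<le> 1"
  shows "0 < gfun h b t" "gfun h b t \<le> t / 3"
proof -
  have H: "0 < 3 * real h" using h by simp
  show "0 < gfun h b t" unfolding gfun_def using H b t by simp
  have "t ^ (h + 1) \<le> t" using t power_decreasing[of 1 "h+1" t] by simp
  moreover have "b * t ^ (h + 1) \<le> 1 * t ^ (h + 1)" using b t by (intro mult_right_mono) auto
  ultimately have bt: "b * t ^ (h + 1) \<le> t" by simp
  have "3 \<le> (3 * real h) ^ (h + 1)"
  proof -
    have "1 \<le> real h" using h by simp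
    then have "3 \<le> 3 * real h" by simp
    also have "\<dots> \<le> (3 * real h) ^ (h + 1)"
    proof -
      have "1 \<le> (3 * real h) ^ h" using \<open>1 \<le> real h\<close> by (intro one_le_power) simp
      then have "3 * real h * 1 \<le> 3 * real h * (3 * real h) ^ h" using H by (intro mult_left_mono) auto
      then show ?thesis by simp
    qed
    finally show ?thesis .
  qed
  then have Q: "3 \<le> (3 * real h) ^ (h + 1)" .
  have "b * t ^ (h + 1) / (3 * real h) ^ (h + 1) \<le> t / (3 * real h) ^ (h + 1)"
    using bt H by (intro divide_right_mono) auto
  also have "\<dots> \<le> t / 3" using Q t by (intro divide_left_mono) auto
  finally show "gfun h b t \<le> t / 3" unfolding gfun_def .
qed

lemma gfun_iter:
  assumes h: "0 < h" and b: "0 < b" "b < 1" and t: "0 < t" "t \<le> 1"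
  shows "0 < (gfun h b ^^ n) t \<and> (gfun h b ^^ n) t \<le> t"
proof (induction n)
  case 0 then show ?case using t by simp
next
  case (Suc n)
  then have "0 < gfun h b ((gfun h b ^^ n) t) \<and> gfun h b ((gfun h b ^^ n) t) \<le> (gfun h b ^^ n) t / 3"
    using gfun_props[OF h b, of "(gfun h b ^^ n) t"] t by auto
  then show ?case using Suc by auto
qed

context gs begin

lemma chain:
  assumes h: "0 < h" and al: "al = (gfun h be ^^ h) be" and p0: "0 < pp"
  shows "i \<le> h \<Longrightarrow> GB i ((gfun h be ^^ (h - i)) be)"
proof (induction i)
  case 0 then show ?case using base al by simp
next
  case (Suc i)
  define t where "t = (gfun h be ^^ (h - Suc i)) be"
  have t01: "0 < t" "t \<le> be" unfolding t_def using gfun_iter[OF h be0 be1 be0] be1 by auto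
  then have t1: "t \<le> 1" using be1 by simp
  have hs: "h - i = Suc (h - Suc i)" using Suc.prems by simp
  have D: "(gfun h be ^^ (h - i)) be = gfun h be t" unfolding hs t_def by simp
  have GBi: "GB i (gfun h be t)" using Suc D by simp
  note gp = gfun_props[OF h be0 be1 t01(1) t1]
  define lam where "lam = t / (3 * real h)"
  have H: "0 < 3 * real h" using h by simp
  have l0: "0 < lam" unfolding lam_def using t01 H by simp
  have l1: "lam \<le> 1" unfolding lam_def using t1 h by (simp add: divide_simps)
  have G1: "GB (Suc i) (al + real h * (lam + gfun h be t / (be * lam ^ h)))"
    by (rule step[OF GBi _ l0 l1 p0]) (use gp in simp)
  have alt: "al \<le> gfun h be t"
  proof -
    have f1: "(gfun h be ^^ (i + (h - i))) be = (gfun h be ^^ i) ((gfun h be ^^ (h - i)) be)"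
      by (simp only: funpow_add comp_apply)
    have f2: "i + (h - i) = h" using Suc.prems by simp
    have "al = (gfun h be ^^ i) ((gfun h be ^^ (h - i)) be)" unfolding al using f1 unfolding f2 .
    also have "\<dots> \<le> (gfun h be ^^ (h - i)) be"
    proof -
      have g1: "gfun h be t \<le> 1" using gp(2) t1 by simp
      show ?thesis unfolding D using gfun_iter[OF h be0 be1 gp(1) g1, of i] by simp
    qed
    finally show ?thesis using D by simp
  qed
  have e3: "real h * (gfun h be t / (be * lam ^ h)) = t / 3"
    unfolding gfun_def lam_def using H be0 t01 h
    by (simp add: field_simps power_divide)
  have e2: "real h * lam = t / 3" unfolding lam_def using H by simp
  have "al + real h * (lam + gfun h be t / (be * lam ^ h)) \<le> t"
  proof -
    have "al + real h * (lam + gfun h be t / (be * lam ^ h)) = al + real h * lam + real h * (gfun h be t / (be * lam ^ h))"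
      by (simp add: distrib_left)
    then show ?thesis using alt gp(2) e2 e3 by linarith
  qed
  then have "GB (Suc i) t" using G1 GB_mono by blast
  then show ?case unfolding t_def .
qed

lemma sum_all:
  assumes j1: "1 \<le> j" and p0: "0 < pp"
  shows "nn ^ (j + 1) * pp ^ j \<le> (\<Sum>S\<in>seqs V j. real (card (nbhd V E S)))"
proof -
  have n0: "0 < nn"
  proof (rule ccontr)
    assume "\<not> 0 < nn" then have "nn = 0" by simp
    then have "pp = 0" unfolding density_def by simp
    then show False using p0 by simp
  qed
  define d where "d v = real (card {u\<in>V. E u v})" for v
  have fS: "finite (seqs V j)" by (rule finite_seqs[OF sg(1)])
  have "(\<Sum>S\<in>seqs V j. real (card (nbhd V E S))) = (\<Sum>S\<in>seqs V j. \<Sum>v\<in>V. if v \<in> nbhd V E S then 1 else 0)"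
  proof (intro sum.cong refl)
    fix S
    have "nbhd V E S = {v\<in>V. v \<in> nbhd V E S}" using nb_sub by auto
    then show "real (card (nbhd V E S)) = (\<Sum>v\<in>V. if v \<in> nbhd V E S then 1 else 0)"
      using sum.inter_filter[OF sg(1), of "\<lambda>_. (1::real)" "\<lambda>v. v \<in> nbhd V E S"] by simp
  qed
  also have "\<dots> = (\<Sum>v\<in>V. \<Sum>S\<in>seqs V j. if v \<in> nbhd V E S then 1 else 0)" by (rule sum.swap)
  also have "\<dots> = (\<Sum>v\<in>V. d v ^ j)"
  proof (intro sum.cong refl)
    fix v assume v: "v \<in> V"
    have "{S\<in>seqs V j. v \<in> nbhd V E S} = seqs {u\<in>V. E u v} j"
      unfolding seqs_def nbhd_def using v by auto
    moreover have "finite {u\<in>V. E u v}" using sg(1) by simp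
    ultimately show "(\<Sum>S\<in>seqs V j. if v \<in> nbhd V E S then 1 else 0) = d v ^ j"
      unfolding d_def using sum.inter_filter[OF fS, of "\<lambda>_. (1::real)" "\<lambda>S. v \<in> nbhd V E S"]
      by (simp add: card_seqs)
  qed
  finally have eq: "(\<Sum>S\<in>seqs V j. real (card (nbhd V E S))) = (\<Sum>v\<in>V. d v ^ j)" .
  have pn: "pp * nn ^ 2 = 2 * real (num_edges V E)" unfolding density_def using n0 by simp
  have "pp * nn ^ 2 \<le> (\<Sum>v\<in>V. d v)" unfolding pn d_def by (rule handshake[OF G])
  then have "(pp * nn ^ 2) ^ j \<le> (\<Sum>v\<in>V. d v) ^ j" using p0 n0 by (intro power_mono) auto
  also have "\<dots> \<le> nn ^ (j - 1) * (\<Sum>v\<in>V. d v ^ j)"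
    by (rule pmean[OF sg(1) _ j1]) (simp add: d_def)
  finally have A: "(pp * nn ^ 2) ^ j \<le> nn ^ (j - 1) * (\<Sum>v\<in>V. d v ^ j)" .
  have "(pp * nn ^ 2) ^ j = nn ^ (j - 1) * (nn ^ (j + 1) * pp ^ j)"
  proof -
    have "(pp * nn ^ 2) ^ j = pp ^ j * nn ^ (2 * j)" by (simp add: power_mult_distrib power_mult)
    also have "2 * j = (j - 1) + (j + 1)" using j1 by simp
    finally show ?thesis by (simp add: power_add mult_ac)
  qed
  with A have "nn ^ (j - 1) * (nn ^ (j + 1) * pp ^ j) \<le> nn ^ (j - 1) * (\<Sum>v\<in>V. d v ^ j)" by simp
  then have "nn ^ (j + 1) * pp ^ j \<le> (\<Sum>v\<in>V. d v ^ j)" using n0 by simp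
  then show ?thesis using eq by simp
qed

end

theorem theorem3p3:
  fixes h :: nat and \<beta> :: real
  assumes "0 < h" and "0 < \<beta>" and "\<beta> < 1"
  shows "\<exists>\<alpha>::real. \<alpha> > 0 \<and>
    (\<forall>V E. simple_graph V E \<longrightarrow>
      (\<forall>i j. 1 \<le> i \<and> i \<le> h \<and> 1 \<le> j \<and> j \<le> h \<longrightarrow>
        (\<Sum>S\<in>good_seqs \<alpha> \<beta> h V E i j. real (card (nbhd V E S)))
          \<ge> (1 - \<beta>) * real (card V) ^ (j + 1) * density V E ^ j))"
proof -
  define al where "al = (gfun h \<beta> ^^ h) \<beta>"
  have al: "0 < al" "al \<le> \<beta>" unfolding al_def using gfun_iter[OF assms assms(2)] assms(3) by auto
  show ?thesis
  proof (intro exI[of _ al] conjI allI impI)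
    show "0 < al" by (rule al(1))
  next
    fix V E i j assume G: "simple_graph V E" and ij: "1 \<le> i \<and> i \<le> h \<and> 1 \<le> j \<and> j \<le> h"
    interpret gs al \<beta> h V E using G al assms by unfold_locales auto
    have gs_eq: "good_seqs al \<beta> h V E i j = {S \<in> seqs V j. gd i S}"
      unfolding good_seqs_def seqs_def by auto
    have LHS0: "0 \<le> (\<Sum>S\<in>good_seqs al \<beta> h V E i j. real (card (nbhd V E S)))" by (simp add: sum_nonneg)
    show "(1 - \<beta>) * nn ^ (j + 1) * pp ^ j \<le> (\<Sum>S\<in>good_seqs al \<beta> h V E i j. real (card (nbhd V E S)))"
    proof (cases "pp = 0")
      case True
      have "0 < j" using ij by simp
      then show ?thesis using LHS0 True by (simp add: zero_power)
    next
      case False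
      then have p0: "0 < pp" using pp_nonneg by simp
      have "GB i ((gfun h \<beta> ^^ (h - i)) \<beta>)" by (rule chain[OF assms(1) al_def p0]) (use ij in simp)
      moreover have "(gfun h \<beta> ^^ (h - i)) \<beta> \<le> \<beta>" using gfun_iter[OF assms assms(2)] assms(3) by auto
      ultimately have "GB i \<beta>" by (rule GB_mono)
      then have "bsum i j 1 \<le> \<beta> * nn ^ (j + 1) * pp ^ (j * 1)" unfolding GB_def using ij by blast
      then have B: "bsum i j 1 \<le> \<beta> * nn ^ (j + 1) * pp ^ j" by simp
      have fS: "finite (seqs V j)" by (rule finite_seqs[OF sg(1)])
      let ?A = "{S \<in> seqs V j. gd i S}" and ?B = "{T \<in> seqs V j. \<not> gd i T}"
      have U: "seqs V j = ?A \<union> ?B" by auto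
      have fA: "finite ?A" "finite ?B" using fS by auto
      have dj: "?A \<inter> ?B = {}" by auto
      have "(\<Sum>S\<in>?A \<union> ?B. real (card (nbhd V E S))) = (\<Sum>S\<in>?A. real (card (nbhd V E S))) + (\<Sum>S\<in>?B. real (card (nbhd V E S)))"
        by (rule sum.union_disjoint[OF fA dj])
      then have sp: "(\<Sum>S\<in>seqs V j. real (card (nbhd V E S)))
          = (\<Sum>S\<in>good_seqs al \<beta> h V E i j. real (card (nbhd V E S))) + bsum i j 1"
        unfolding U[symmetric] gs_eq bsum_def bad_set_def power_one_right .
      have e: "(1 - \<beta>) * nn ^ (j + 1) * pp ^ j = nn ^ (j + 1) * pp ^ j - \<beta> * nn ^ (j + 1) * pp ^ j"
        by (simp add: algebra_simps)
      have "nn ^ (j + 1) * pp ^ j \<le> (\<Sum>S\<in>seqs V j. real (card (nbhd V E S)))"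
        using sum_all[of j] p0 ij by simp
      then show ?thesis using sp B e by linarith
    qed
  qed
qed

end
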